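(* Let $\mu<\lambda$ be infinite cardinals with $\mu^{<\mu}=\mu$ and $\lambda$ regular. Then the forcing notion $\mathbb P(\lambda,\mu)$ satisfies the $\mu^+$-chain condition.
   Context: Let $3$ denote the three-element set of symbols $\{\ge,\perp,u\}$. For a set $w$ of ordinals, $[w]^2=\{(i,j): i<j,\ i,j\in w\}$. A valuation function is a map $p:[w]^2\to 3$ such that: (1) if $i<j<k$ in $w$, $p(i,j)={\ge}$ and $p(j,k)={\ge}$, then $p(i,k)={\ge}$; (2) if $i<j<k$ in $w$ and $\{p(i,j),p(i,k)\}=\{\perp,\ge\}$ then $p(j,k)={\perp}$; and if $i<j<k$, $p(i,j)={\perp}$, $p(j,k)={\ge}$, then $p(i,k)={\perp}$. $\mathbb P(\lambda,\mu)$ is the set of valuation functions whose domain is a subset of $\lambda$ of cardinality less than $\mu$, ordered by reverse inclusion. *)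

theory Defs
  imports Main
begin

text \<open>The three-element set of symbols: Ge stands for the symbol greater-or-equal,
  Perp for perpendicular, U for u.\<close>
datatype sym3 = Ge | Perp | U

text \<open>Ordinals below lambda are the elements of a type carrying a cardinal order rl
  (so Field rl = UNIV); strict order i < j is (i,j) in rl and i different from j.\<close>
definition olt :: "'a rel \<Rightarrow> 'a \<Rightarrow> 'a \<Rightarrow> bool" where
  "olt r i j \<longleftrightarrow> (i, j) \<in> r \<and> i \<noteq> j"

definition pairs2 :: "'a rel \<Rightarrow> 'a set \<Rightarrow> ('a \<times> 'a) set" where
  "pairs2 r w = {(i, j). i \<in> w \<and> j \<in> w \<and> olt r i j}"

definition valuation :: "'a rel \<Rightarrow> 'a set \<Rightarrow> ('a \<times> 'a \<rightharpoonup> sym3) \<Rightarrow> bool" where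
  "valuation r w p \<longleftrightarrow> dom p = pairs2 r w \<and>
    (\<forall>i\<in>w. \<forall>j\<in>w. \<forall>k\<in>w. olt r i j \<and> olt r j k \<longrightarrow>
       (p (i, j) = Some Ge \<and> p (j, k) = Some Ge \<longrightarrow> p (i, k) = Some Ge) \<and>
       ({the (p (i, j)), the (p (i, k))} = {Perp, Ge} \<longrightarrow> p (j, k) = Some Perp) \<and>
       (p (i, j) = Some Perp \<and> p (j, k) = Some Ge \<longrightarrow> p (i, k) = Some Perp))"

text \<open>The forcing notion P(lambda, mu): valuation functions whose domain is [w]^2 for
  some w subset of lambda with |w| < mu. Ordered by reverse inclusion.\<close>
definition Pforce :: "'a rel \<Rightarrow> 'b rel \<Rightarrow> ('a \<times> 'a \<rightharpoonup> sym3) set" where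
  "Pforce rl rm = {p. \<exists>w. w \<subseteq> Field rl \<and> (card_of w, rm) \<in> ordLess \<and> valuation rl w p}"

definition compatible :: "('a \<times> 'a \<rightharpoonup> sym3) set \<Rightarrow> ('a \<times> 'a \<rightharpoonup> sym3) \<Rightarrow> ('a \<times> 'a \<rightharpoonup> sym3) \<Rightarrow> bool" where
  "compatible P p q \<longleftrightarrow> (\<exists>s\<in>P. p \<subseteq>\<^sub>m s \<and> q \<subseteq>\<^sub>m s)"

definition antichain :: "('a \<times> 'a \<rightharpoonup> sym3) set \<Rightarrow> ('a \<times> 'a \<rightharpoonup> sym3) set \<Rightarrow> bool" where
  "antichain P A \<longleftrightarrow> A \<subseteq> P \<and> (\<forall>p\<in>A. \<forall>q\<in>A. p \<noteq> q \<longrightarrow> \<not> compatible P p q)"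

definition chain_condition :: "('a \<times> 'a \<rightharpoonup> sym3) set \<Rightarrow> 'c rel \<Rightarrow> bool" where
  "chain_condition P kappa \<longleftrightarrow> (\<forall>A. antichain P A \<longrightarrow> (card_of A, kappa) \<in> ordLess)"

text \<open>mu^{<mu} as the cardinality of the union over ordinals alpha < mu of the
  function spaces alpha -> mu.\<close>
definition less_exp_set :: "'b rel \<Rightarrow> ('b \<Rightarrow> 'b) set" where
  "less_exp_set rm = (\<Union>a\<in>Field rm. Func (underS rm a) (Field rm))"

end

theory Submission
  imports Defs
begin


lemma co_wo: "card_order r \<Longrightarrow> well_order_on UNIV r"
  unfolding card_order_on_def by blast

lemma olt_trans: "card_order r \<Longrightarrow> olt r x y \<Longrightarrow> olt r y z \<Longrightarrow> olt r x z"
  unfolding olt_def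
  by (drule co_wo) (auto simp: well_order_on_def linear_order_on_def partial_order_on_def
      preorder_on_def antisym_def trans_def)

lemma olt_asym: "card_order r \<Longrightarrow> olt r x y \<Longrightarrow> \<not> olt r y x"
  unfolding olt_def
  by (drule co_wo) (auto simp: well_order_on_def linear_order_on_def partial_order_on_def
      preorder_on_def antisym_def trans_def)

lemma olt_irrefl: "\<not> olt r x x"
  unfolding olt_def by simp

lemma olt_total: "card_order r \<Longrightarrow> x \<noteq> y \<Longrightarrow> olt r x y \<or> olt r y x"
  unfolding olt_def
  by (drule co_wo) (auto simp: well_order_on_def linear_order_on_def total_on_def)


context
  fixes rl :: "'a rel" and a b :: "'a set" and p q :: "'a \<times> 'a \<rightharpoonup> sym3"
  assumes co: "card_order rl" and vp: "valuation rl a p" and vq: "valuation rl b q"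
    and agree: "\<forall>x\<in>dom p \<inter> dom q. p x = q x"
begin

definition hh where "hh = p ++ q"
definition com where "com x y \<longleftrightarrow> (x \<in> a \<and> y \<in> a) \<or> (x \<in> b \<and> y \<in> b)"
definition GH where "GH x y \<longleftrightarrow> hh (x, y) = Some Ge"
definition PH where "PH x y \<longleftrightarrow> hh (x, y) = Some Perp \<or> hh (y, x) = Some Perp"

lemma dom_p: "dom p = pairs2 rl a" using vp unfolding valuation_def by blast
lemma dom_q: "dom q = pairs2 rl b" using vq unfolding valuation_def by blast

lemma hh_a: "x \<in> a \<Longrightarrow> y \<in> a \<Longrightarrow> hh (x, y) = p (x, y)"
proof (cases "q (x, y)")
  case None
  then show ?thesis by (simp add: hh_def map_add_def)
next
  case (Some v)
  assume xy: "x \<in> a" "y \<in> a"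
  have "(x, y) \<in> dom q" using Some by blast
  then have "(x, y) \<in> dom p" using xy by (simp add: dom_p dom_q pairs2_def)
  then have "p (x, y) = q (x, y)" using agree \<open>(x, y) \<in> dom q\<close> by blast
  then show ?thesis using Some by (simp add: hh_def)
qed

lemma hh_b: "x \<in> b \<Longrightarrow> y \<in> b \<Longrightarrow> hh (x, y) = q (x, y)"
proof (cases "q (x, y)")
  case None
  assume xy: "x \<in> b" "y \<in> b"
  have "(x, y) \<notin> dom p"
  proof
    assume "(x, y) \<in> dom p"
    then have "(x, y) \<in> dom q" using xy by (simp add: dom_p dom_q pairs2_def)
    then show False using None by blast
  qed
  then show ?thesis using None by (simp add: hh_def map_add_def domIff)
next
  case (Some v)
  then show ?thesis by (simp add: hh_def)
qed

lemma hh_some: "hh (x, y) = Some v \<Longrightarrow> com x y \<and> olt rl x y"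
proof -
  assume "hh (x, y) = Some v"
  then have "(x, y) \<in> dom p \<or> (x, y) \<in> dom q" unfolding hh_def by (auto simp: map_add_Some_iff)
  then show ?thesis by (auto simp: dom_p dom_q pairs2_def com_def)
qed


lemma GH_com: "GH x y \<Longrightarrow> com x y" unfolding GH_def using hh_some by blast
lemma GH_lt: "GH x y \<Longrightarrow> olt rl x y" unfolding GH_def using hh_some by blast

lemma PH_com: "PH x y \<Longrightarrow> com x y" unfolding PH_def using hh_some[of x y] hh_some[of y x] unfolding com_def by blast
lemma PH_sym: "PH x y \<longleftrightarrow> PH y x" unfolding PH_def by blast

lemma PH_irr: "\<not> PH x x" unfolding PH_def using hh_some[of x x] olt_irrefl[of rl x] by blast
lemma GH_PH: "GH x y \<Longrightarrow> PH x y \<Longrightarrow> False"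
  unfolding GH_def PH_def using hh_some[of x y] hh_some[of y x] olt_asym[OF co, of x y] by auto


lemma com_all: "com x y \<Longrightarrow> com y z \<Longrightarrow> com x z \<Longrightarrow>
   (x \<in> a \<and> y \<in> a \<and> z \<in> a) \<or> (x \<in> b \<and> y \<in> b \<and> z \<in> b)"
  unfolding com_def by auto

lemma vrules:
  assumes "valuation rl w f" "i \<in> w" "j \<in> w" "k \<in> w" "olt rl i j" "olt rl j k"
  shows "f (i, j) = Some Ge \<Longrightarrow> f (j, k) = Some Ge \<Longrightarrow> f (i, k) = Some Ge"
    and "f (i, j) = Some Ge \<Longrightarrow> f (i, k) = Some Perp \<Longrightarrow> f (j, k) = Some Perp"
    and "f (i, j) = Some Perp \<Longrightarrow> f (i, k) = Some Ge \<Longrightarrow> f (j, k) = Some Perp"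
    and "f (i, j) = Some Perp \<Longrightarrow> f (j, k) = Some Ge \<Longrightarrow> f (i, k) = Some Perp"
proof -
  have H: "(f (i, j) = Some Ge \<and> f (j, k) = Some Ge \<longrightarrow> f (i, k) = Some Ge) \<and>
       ({the (f (i, j)), the (f (i, k))} = {Perp, Ge} \<longrightarrow> f (j, k) = Some Perp) \<and>
       (f (i, j) = Some Perp \<and> f (j, k) = Some Ge \<longrightarrow> f (i, k) = Some Perp)"
  proof -
    have A: "\<forall>i\<in>w. \<forall>j\<in>w. \<forall>k\<in>w. olt rl i j \<and> olt rl j k \<longrightarrow>
       (f (i, j) = Some Ge \<and> f (j, k) = Some Ge \<longrightarrow> f (i, k) = Some Ge) \<and>
       ({the (f (i, j)), the (f (i, k))} = {Perp, Ge} \<longrightarrow> f (j, k) = Some Perp) \<and>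
       (f (i, j) = Some Perp \<and> f (j, k) = Some Ge \<longrightarrow> f (i, k) = Some Perp)"
      using assms(1) unfolding valuation_def by (rule conjunct2)
    show ?thesis using A assms(2-6) by (rule_tac mp[OF A[THEN bspec, THEN bspec, THEN bspec]]) auto
  qed
  show "f (i, j) = Some Ge \<Longrightarrow> f (j, k) = Some Ge \<Longrightarrow> f (i, k) = Some Ge" using H by blast
  show "f (i, j) = Some Ge \<Longrightarrow> f (i, k) = Some Perp \<Longrightarrow> f (j, k) = Some Perp"
  proof -
    assume "f (i, j) = Some Ge" "f (i, k) = Some Perp"
    then have "{the (f (i, j)), the (f (i, k))} = {Perp, Ge}" using insert_commute[of Ge Perp "{}"] by simp
    then show ?thesis using H by blast
  qed
  show "f (i, j) = Some Perp \<Longrightarrow> f (i, k) = Some Ge \<Longrightarrow> f (j, k) = Some Perp"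
  proof -
    assume "f (i, j) = Some Perp" "f (i, k) = Some Ge"
    then have "{the (f (i, j)), the (f (i, k))} = {Perp, Ge}" by simp
    then show ?thesis using H by blast
  qed
  show "f (i, j) = Some Perp \<Longrightarrow> f (j, k) = Some Ge \<Longrightarrow> f (i, k) = Some Perp" using H by blast
qed


lemma side_rules_all:
  assumes "(i \<in> a \<and> j \<in> a \<and> k \<in> a) \<or> (i \<in> b \<and> j \<in> b \<and> k \<in> b)" "olt rl i j" "olt rl j k"
  shows "(hh (i, j) = Some Ge \<longrightarrow> hh (j, k) = Some Ge \<longrightarrow> hh (i, k) = Some Ge) \<and>
    (hh (i, j) = Some Ge \<longrightarrow> hh (i, k) = Some Perp \<longrightarrow> hh (j, k) = Some Perp) \<and>
    (hh (i, j) = Some Perp \<longrightarrow> hh (i, k) = Some Ge \<longrightarrow> hh (j, k) = Some Perp) \<and>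
    (hh (i, j) = Some Perp \<longrightarrow> hh (j, k) = Some Ge \<longrightarrow> hh (i, k) = Some Perp)"
  using assms(1)
proof
  assume H: "i \<in> a \<and> j \<in> a \<and> k \<in> a"
  have e: "hh (i, j) = p (i, j)" "hh (j, k) = p (j, k)" "hh (i, k) = p (i, k)" using H hh_a by auto
  show ?thesis unfolding e using vrules[OF vp, of i j k] H assms(2,3) by blast
next
  assume H: "i \<in> b \<and> j \<in> b \<and> k \<in> b"
  have e: "hh (i, j) = q (i, j)" "hh (j, k) = q (j, k)" "hh (i, k) = q (i, k)" using H hh_b by auto
  show ?thesis unfolding e using vrules[OF vq, of i j k] H assms(2,3) by blast
qed

lemma GH_trans: "GH x y \<Longrightarrow> GH y z \<Longrightarrow> com x z \<Longrightarrow> GH x z"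
proof -
  assume 1: "GH x y" "GH y z" "com x z"
  have "(x \<in> a \<and> y \<in> a \<and> z \<in> a) \<or> (x \<in> b \<and> y \<in> b \<and> z \<in> b)"
    using com_all[of x y z] 1 GH_com by blast
  then show ?thesis using side_rules_all[of x y z] 1 GH_lt unfolding GH_def by blast
qed


lemma PH_down: "PH u v \<Longrightarrow> GH u u' \<Longrightarrow> com u' v \<Longrightarrow> PH u' v"
proof -
  assume 1: "PH u v" "GH u u'" "com u' v"
  have c: "(u \<in> a \<and> u' \<in> a \<and> v \<in> a) \<or> (u \<in> b \<and> u' \<in> b \<and> v \<in> b)"
    using com_all[of u u' v] 1 GH_com PH_com by blast
  note R = side_rules_all[OF c]
  have lt: "olt rl u u'" using 1 GH_lt by blast
  have "v \<noteq> u" using 1 PH_irr by blast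
  show ?thesis
  proof (cases "v = u'")
    case True then show ?thesis using 1 GH_PH by blast
  next
    case False
    have t1: "olt rl v u \<or> olt rl u v" using olt_total[OF co, of v u] \<open>v \<noteq> u\<close> by blast
    have t2: "olt rl v u' \<or> olt rl u' v" using olt_total[OF co, of v u'] False by blast
    have g: "hh (u, u') = Some Ge" using 1 unfolding GH_def by blast
    show ?thesis
    proof (cases "olt rl v u")
      case True
      have "hh (v, u) = Some Perp"
        using 1(1) hh_some[of u v] True olt_asym[OF co, of v u] unfolding PH_def by auto
      then have "hh (v, u') = Some Perp" using side_rules_all[OF _ True lt] c g by blast
      then show ?thesis unfolding PH_def by blast
    next
      case False
      then have uv: "olt rl u v" using t1 by blast
      have p1: "hh (u, v) = Some Perp"
        using 1(1) hh_some[of v u] uv olt_asym[OF co, of u v] unfolding PH_def by auto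
      show ?thesis
      proof (cases "olt rl v u'")
        case True
        have "hh (v, u') = Some Perp" using side_rules_all[OF _ uv True] c g p1 by blast
        then show ?thesis unfolding PH_def by blast
      next
        case False
        then have "olt rl u' v" using t2 by blast
        then have "hh (u', v) = Some Perp" using side_rules_all[OF _ lt] c g p1 by blast
        then show ?thesis unfolding PH_def by blast
      qed
    qed
  qed
qed


lemma com_R1: "m \<in> a \<inter> b \<Longrightarrow> y \<in> a \<union> b \<Longrightarrow> com m y" unfolding com_def by auto
lemma com_R2: "m \<in> a \<inter> b \<Longrightarrow> y \<in> a \<union> b \<Longrightarrow> com y m" unfolding com_def by auto
lemma com_in: "com x y \<Longrightarrow> x \<in> a \<union> b \<and> y \<in> a \<union> b" unfolding com_def by auto
lemma mid_R: "com u v \<Longrightarrow> com v w \<Longrightarrow> \<not> com u w \<Longrightarrow> v \<in> a \<inter> b" unfolding com_def by auto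

definition GS where "GS x y \<longleftrightarrow> GH x y \<or> (\<exists>m\<in>a \<inter> b. GH x m \<and> GH m y)"
definition PS where "PS x y \<longleftrightarrow> PH x y \<or> (\<exists>m\<in>a \<inter> b. (GH m x \<and> PH m y) \<or> (PH x m \<and> GH m y))"

lemma GH_in: "GH x y \<Longrightarrow> x \<in> a \<union> b \<and> y \<in> a \<union> b" using GH_com com_in by blast
lemma PH_in: "PH x y \<Longrightarrow> x \<in> a \<union> b \<and> y \<in> a \<union> b" using PH_com com_in by blast

lemma GS_lt: "GS x y \<Longrightarrow> olt rl x y"
  unfolding GS_def using GH_lt olt_trans[OF co] by blast

lemma GS_trans: "GS x y \<Longrightarrow> GS y z \<Longrightarrow> GS x z"
proof -
  assume 1: "GS x y" and 2: "GS y z"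
  from 1 consider "GH x y" | m1 where "m1 \<in> a \<inter> b" "GH x m1" "GH m1 y" unfolding GS_def by blast
  then show ?thesis
  proof cases
    case 11: 1
    from 2 consider "GH y z" | m2 where "m2 \<in> a \<inter> b" "GH y m2" "GH m2 z" unfolding GS_def by blast
    then show ?thesis
    proof cases
      case 1
      show ?thesis
      proof (cases "com x z")
        case True then show ?thesis using GH_trans 11 1 unfolding GS_def by blast
      next
        case False
        then have "y \<in> a \<inter> b" using mid_R GH_com 11 1 by blast
        then show ?thesis using 11 1 unfolding GS_def by blast
      qed
    next
      case 2
      have "GH x m2" using GH_trans[OF 11 2(2)] com_R2[OF 2(1)] GH_in 11 by blast
      then show ?thesis using 2 unfolding GS_def by blast
    qed
  next
    case 12: 2
    from 2 consider "GH y z" | m2 where "m2 \<in> a \<inter> b" "GH y m2" "GH m2 z" unfolding GS_def by blast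
    then show ?thesis
    proof cases
      case 1
      have "GH m1 z" using GH_trans[OF 12(3) 1] com_R1[OF 12(1)] GH_in 1 by blast
      then show ?thesis using 12 unfolding GS_def by blast
    next
      case 2
      have "GH m1 m2" using GH_trans[OF 12(3) 2(2)] com_R1[OF 12(1)] 2(1) by blast
      then have "GH x m2" using GH_trans[OF 12(2)] com_R2[OF 2(1)] GH_in 12(2) by blast
      then show ?thesis using 2 unfolding GS_def by blast
    qed
  qed
qed

lemma PS_sym: "PS x y \<longleftrightarrow> PS y x"
  unfolding PS_def using PH_sym by blast

lemma PHd: "PH u v \<Longrightarrow> GH u u' \<Longrightarrow> m \<in> a \<inter> b \<Longrightarrow> (u' = m \<or> v = m) \<Longrightarrow> PH u' v"
  using PH_down com_R1 com_R2 GH_in PH_in by blast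

lemma PS_down: "PS x y \<Longrightarrow> GS x x' \<Longrightarrow> PS x' y"
proof -
  assume P: "PS x y" and G: "GS x x'"
  from P consider "PH x y" | m where "m \<in> a \<inter> b" "GH m x" "PH m y"
    | m where "m \<in> a \<inter> b" "PH x m" "GH m y" unfolding PS_def by blast
  then show ?thesis
  proof cases
    case A: 1
    from G consider "GH x x'" | m' where "m' \<in> a \<inter> b" "GH x m'" "GH m' x'" unfolding GS_def by blast
    then show ?thesis
    proof cases
      case 1
      show ?thesis
      proof (cases "com x' y")
        case True then show ?thesis using PH_down[OF A 1] unfolding PS_def by blast
      next
        case False
        then have "x \<in> a \<inter> b" using mid_R[of x' x y] GH_com[OF 1] PH_com[OF A] com_def by blast
        then show ?thesis using A 1 unfolding PS_def by blast
      qed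
    next
      case 2
      have "PH m' y" using PHd[OF A 2(2) 2(1)] by blast
      then show ?thesis using 2 unfolding PS_def by blast
    qed
  next
    case B: 2
    have "GS m x'" using GS_trans[OF _ G] B(2) unfolding GS_def by blast
    then consider "GH m x'" | m' where "m' \<in> a \<inter> b" "GH m m'" "GH m' x'" unfolding GS_def by blast
    then show ?thesis
    proof cases
      case 1 then show ?thesis using B unfolding PS_def by blast
    next
      case 2
      have "PH m' y" using PHd[OF B(3) 2(2) 2(1)] by blast
      then show ?thesis using 2 unfolding PS_def by blast
    qed
  next
    case C: 3
    from G consider "GH x x'" | m' where "m' \<in> a \<inter> b" "GH x m'" "GH m' x'" unfolding GS_def by blast
    then show ?thesis
    proof cases
      case 1
      have "PH x' m" using PHd[OF C(2) 1 C(1)] by blast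
      then show ?thesis using C unfolding PS_def by blast
    next
      case 2
      have "PH m' m" using PHd[OF C(2) 2(2) C(1)] by blast
      then have "PH m m'" using PH_sym by blast
      then have "PH y m'" using PHd[OF _ C(3) 2(1)] by blast
      then have "PH m' y" using PH_sym by blast
      then show ?thesis using 2 unfolding PS_def by blast
    qed
  qed
qed

lemma PS_GS: "PS x y \<Longrightarrow> GS x y \<Longrightarrow> False"
proof -
  assume P: "PS x y" and G: "GS x y"
  from P consider "PH x y" | m where "m \<in> a \<inter> b" "GH m x" "PH m y"
    | m where "m \<in> a \<inter> b" "PH x m" "GH m y" unfolding PS_def by blast
  then show ?thesis
  proof cases
    case A: 1
    from G consider "GH x y" | m' where "m' \<in> a \<inter> b" "GH x m'" "GH m' y" unfolding GS_def by blast
    then show ?thesis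
    proof cases
      case 1 then show ?thesis using GH_PH A by blast
    next
      case 2
      have "PH m' y" using PHd[OF A 2(2) 2(1)] by blast
      then show ?thesis using GH_PH 2 by blast
    qed
  next
    case B: 2
    have "GS m y" using GS_trans[OF _ G] B(2) unfolding GS_def by blast
    then consider "GH m y" | m' where "m' \<in> a \<inter> b" "GH m m'" "GH m' y" unfolding GS_def by blast
    then show ?thesis
    proof cases
      case 1 then show ?thesis using B GH_PH by blast
    next
      case 2
      have "PH m' y" using PHd[OF B(3) 2(2) 2(1)] by blast
      then show ?thesis using 2 GH_PH by blast
    qed
  next
    case C: 3
    from G consider "GH x y" | m' where "m' \<in> a \<inter> b" "GH x m'" "GH m' y" unfolding GS_def by blast
    then show ?thesis
    proof cases
      case 1
      have "PH y m" using PHd[OF C(2) 1 C(1)] by blast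
      then show ?thesis using C GH_PH PH_sym by blast
    next
      case 2
      have "PH m' m" using PHd[OF C(2) 2(2) C(1)] by blast
      then have "PH y m" using PHd[OF _ 2(3) C(1)] by blast
      then show ?thesis using C GH_PH PH_sym by blast
    qed
  qed
qed

lemma GS_com: "com x y \<Longrightarrow> GS x y \<Longrightarrow> GH x y"
  unfolding GS_def using GH_trans by blast

lemma PS_com: "com x y \<Longrightarrow> PS x y \<Longrightarrow> PH x y"
proof -
  assume c: "com x y" and P: "PS x y"
  from P consider "PH x y" | m where "m \<in> a \<inter> b" "GH m x" "PH m y"
    | m where "m \<in> a \<inter> b" "PH x m" "GH m y" unfolding PS_def by blast
  then show ?thesis
  proof cases
    case 1 then show ?thesis .
  next
    case 2 then show ?thesis using PH_down[OF 2(3) 2(2) c] by blast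
  next
    case 3
    have "PH m x" using 3 PH_sym by blast
    have c': "com y x" using c unfolding com_def by blast
    have "PH y x" using PH_down[OF \<open>PH m x\<close> 3(3) c'] .
    then show ?thesis using PH_sym by blast
  qed
qed


definition ss where "ss = (\<lambda>(i, j). if i \<in> a \<union> b \<and> j \<in> a \<union> b \<and> olt rl i j
   then Some (if PS i j then Perp else if GS i j then Ge else U) else None)"

lemma ss_val: "i \<in> a \<union> b \<Longrightarrow> j \<in> a \<union> b \<Longrightarrow> olt rl i j \<Longrightarrow>
   ss (i, j) = Some (if PS i j then Perp else if GS i j then Ge else U)"
  unfolding ss_def by simp

lemma dom_ss: "dom ss = pairs2 rl (a \<union> b)"
  unfolding ss_def pairs2_def dom_def by (auto split: if_splits)

lemma ss_ext_hh: "com i j \<Longrightarrow> olt rl i j \<Longrightarrow> hh (i, j) \<noteq> None \<Longrightarrow> ss (i, j) = hh (i, j)"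
proof -
  assume c: "com i j" and lt: "olt rl i j" and nn: "hh (i, j) \<noteq> None"
  have ij: "i \<in> a \<union> b" "j \<in> a \<union> b" using com_in[OF c] by auto
  note sv = ss_val[OF ij lt]
  have ji: "hh (j, i) = None"
  proof (rule ccontr)
    assume "hh (j, i) \<noteq> None"
    then obtain w where "hh (j, i) = Some w" by blast
    then have "olt rl j i" using hh_some by blast
    then show False using lt olt_asym[OF co] by blast
  qed
  obtain v where v: "hh (i, j) = Some v" using nn by blast
  show ?thesis
  proof (cases v)
    case Ge
    then have g: "GH i j" using v unfolding GH_def by simp
    then have gs: "GS i j" unfolding GS_def by blast
    have nps: "\<not> PS i j" using PS_GS[OF _ gs] by blast
    have "ss (i, j) = Some Ge" using sv nps gs by (simp only: if_True if_False)
    then show ?thesis using v Ge by (simp only:)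
  next
    case Perp
    then have "PH i j" using v unfolding PH_def by simp
    then have ps: "PS i j" unfolding PS_def by blast
    have "ss (i, j) = Some Perp" using sv ps by (simp only: if_True)
    then show ?thesis using v Perp by (simp only:)
  next
    case U
    then have "\<not> GH i j" "\<not> PH i j" using v ji unfolding GH_def PH_def by simp_all
    then have ngs: "\<not> GS i j" and nps: "\<not> PS i j" using GS_com[OF c] PS_com[OF c] by blast+
    have "ss (i, j) = Some U" using sv ngs nps by (simp only: if_False)
    then show ?thesis using v U by (simp only:)
  qed
qed

lemma p_le_ss: "p \<subseteq>\<^sub>m ss"
  unfolding map_le_def
proof
  fix x assume xd: "x \<in> dom p"
  then obtain i j where x: "x = (i, j)" "i \<in> a" "j \<in> a" "olt rl i j"
    unfolding dom_p pairs2_def by blast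
  have e: "hh (i, j) = p (i, j)" using hh_a x(2,3) by blast
  have nn: "p (i, j) \<noteq> None" using xd x(1) by blast
  have c: "com i j" using x(2,3) unfolding com_def by blast
  have "ss (i, j) = hh (i, j)" using ss_ext_hh[OF c x(4)] e nn by argo
  then show "p x = ss x" using e x(1) by argo
qed

lemma q_le_ss: "q \<subseteq>\<^sub>m ss"
  unfolding map_le_def
proof
  fix x assume xd: "x \<in> dom q"
  then obtain i j where x: "x = (i, j)" "i \<in> b" "j \<in> b" "olt rl i j"
    unfolding dom_q pairs2_def by blast
  have e: "hh (i, j) = q (i, j)" using hh_b x(2,3) by blast
  have nn: "q (i, j) \<noteq> None" using xd x(1) by blast
  have c: "com i j" using x(2,3) unfolding com_def by blast
  have "ss (i, j) = hh (i, j)" using ss_ext_hh[OF c x(4)] e nn by argo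
  then show "q x = ss x" using e x(1) by argo
qed


lemma ss_cases:
  assumes "i \<in> a \<union> b" "j \<in> a \<union> b" "olt rl i j"
  shows "ss (i, j) = Some Ge \<longleftrightarrow> \<not> PS i j \<and> GS i j"
    and "ss (i, j) = Some Perp \<longleftrightarrow> PS i j"
    and "the (ss (i, j)) = (if PS i j then Perp else if GS i j then Ge else U)"
  using ss_val[OF assms] by auto

lemma ss_valuation: "valuation rl (a \<union> b) ss"
  unfolding valuation_def
proof (intro conjI)
  show "dom ss = pairs2 rl (a \<union> b)" by (rule dom_ss)
next
  show "\<forall>i\<in>a \<union> b. \<forall>j\<in>a \<union> b. \<forall>k\<in>a \<union> b. olt rl i j \<and> olt rl j k \<longrightarrow>
       (ss (i, j) = Some Ge \<and> ss (j, k) = Some Ge \<longrightarrow> ss (i, k) = Some Ge) \<and>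
       ({the (ss (i, j)), the (ss (i, k))} = {Perp, Ge} \<longrightarrow> ss (j, k) = Some Perp) \<and>
       (ss (i, j) = Some Perp \<and> ss (j, k) = Some Ge \<longrightarrow> ss (i, k) = Some Perp)"
  proof (intro ballI impI)
  fix i j k assume in3: "i \<in> a \<union> b" "j \<in> a \<union> b" "k \<in> a \<union> b" and lt: "olt rl i j \<and> olt rl j k"
  have ik: "olt rl i k" using lt olt_trans[OF co] by blast
  note vij = ss_cases[OF in3(1,2) conjunct1[OF lt]]
  note vjk = ss_cases[OF in3(2,3) conjunct2[OF lt]]
  note vik = ss_cases[OF in3(1,3) ik]
  have h1: "ss (i, j) = Some Ge \<and> ss (j, k) = Some Ge \<longrightarrow> ss (i, k) = Some Ge"
  proof
    assume H: "ss (i, j) = Some Ge \<and> ss (j, k) = Some Ge"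
    have g1: "GS i j" using H vij(1) by metis
    have g2: "GS j k" using H vjk(1) by metis
    have gs: "GS i k" using GS_trans[OF g1 g2] .
    have "\<not> PS i k" using PS_GS[of i k] gs by metis
    then show "ss (i, k) = Some Ge" using vik(1) gs by metis
  qed
  have h2: "{the (ss (i, j)), the (ss (i, k))} = {Perp, Ge} \<longrightarrow> ss (j, k) = Some Perp"
  proof
    assume H: "{the (ss (i, j)), the (ss (i, k))} = {Perp, Ge}"
    then have D: "(the (ss (i, j)) = Perp \<and> the (ss (i, k)) = Ge) \<or> (the (ss (i, j)) = Ge \<and> the (ss (i, k)) = Perp)"
      unfolding doubleton_eq_iff .
    have "(PS i j \<and> GS i k) \<or> (GS i j \<and> PS i k)"
    proof (cases "PS i j")
      case True
      then have "the (ss (i, k)) = Ge" using D vij(3) by (metis sym3.distinct)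
      then have "GS i k" using vik(3) by (metis sym3.distinct)
      then show ?thesis using True by blast
    next
      case False
      then have "the (ss (i, j)) = Ge \<and> the (ss (i, k)) = Perp" using D vij(3) by (metis sym3.distinct)
      then have "GS i j" "PS i k" using vij(3) vik(3) False by (metis sym3.distinct)+
      then show ?thesis by blast
    qed
    then have "PS j k"
    proof
      assume A: "PS i j \<and> GS i k"
      then have "PS j i" using PS_sym[of i j] by metis
      then have "PS k j" using PS_down[of i j k] A by metis
      then show ?thesis using PS_sym[of k j] by metis
    next
      assume "GS i j \<and> PS i k"
      then show ?thesis using PS_down[of i k j] by metis
    qed
    then show "ss (j, k) = Some Perp" using vjk(2) by metis
  qed
  have h3: "ss (i, j) = Some Perp \<and> ss (j, k) = Some Ge \<longrightarrow> ss (i, k) = Some Perp"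
  proof
    assume H: "ss (i, j) = Some Perp \<and> ss (j, k) = Some Ge"
    have p1: "PS j i" using H vij(2) PS_sym[of i j] by metis
    have g2: "GS j k" using H vjk(1) by metis
    have "PS k i" using PS_down[OF p1 g2] .
    then have "PS i k" using PS_sym[of i k] by metis
    then show "ss (i, k) = Some Perp" using vik(2) by metis
  qed
  show "(ss (i, j) = Some Ge \<and> ss (j, k) = Some Ge \<longrightarrow> ss (i, k) = Some Ge) \<and>
       ({the (ss (i, j)), the (ss (i, k))} = {Perp, Ge} \<longrightarrow> ss (j, k) = Some Perp) \<and>
       (ss (i, j) = Some Perp \<and> ss (j, k) = Some Ge \<longrightarrow> ss (i, k) = Some Perp)"
    by (intro conjI h1 h2 h3)
  qed
qed

lemma amalgam: "\<exists>s. valuation rl (a \<union> b) s \<and> p \<subseteq>\<^sub>m s \<and> q \<subseteq>\<^sub>m s"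
  using ss_valuation p_le_ss q_le_ss by blast

end


unbundle cardinal_syntax




lemma small_bij:
  assumes r: "Card_order r" and t: "|t| <o r"
  shows "\<exists>a\<in>Field r. \<exists>f. bij_betw f (underS r a) t"
proof -
  have wo: "Well_order r" using r by (rule card_order_on_well_order_on)
  have "\<exists>a\<in>Field r. |t| =o Restr r (underS r a)"
    using ordLess_iff_ordIso_Restr[OF wo card_of_Well_order, of t] t by (rule iffD1)
  then obtain a where a: "a \<in> Field r" and iso: "|t| =o Restr r (underS r a)" by (rule bexE)
  have c: "|Field |t|| =o |Field (Restr r (underS r a))|" using card_of_cong[OF iso] .
  have "wo_rel.ofilter r (underS r a)" using wo_rel.underS_ofilter[of r a] wo unfolding wo_rel_def by simp
  then have fe: "Field (Restr r (underS r a)) = underS r a"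
    using Field_Restr_ofilter[OF wo] by simp
  have "|t| =o |underS r a|" using c unfolding fe Field_card_of .
  then have "|underS r a| =o |t|" by (rule ordIso_symmetric)
  then obtain f where "bij_betw f (underS r a) t" using card_of_ordIso[of "underS r a" t] by blast
  then show ?thesis using a by blast
qed

lemma field_le: "Card_order r \<Longrightarrow> |Field r| \<le>o r"
  using card_of_Field_ordIso ordIso_imp_ordLeq by blast

lemma small_subsets:
  assumes r: "Card_order r" "\<not> finite (Field r)" "|less_exp_set r| \<le>o r" and X: "|X| \<le>o r"
  shows "|{t. t \<subseteq> X \<and> |t| <o r}| \<le>o r"
proof -
  have "|X| \<le>o |Field r|" using X card_of_Field_ordIso[OF r(1)] ordIso_symmetric ordLeq_ordIso_trans by blast
  then obtain e where e: "inj_on e X" "e ` X \<subseteq> Field r" using card_of_ordLeq[of X "Field r"] by (metis)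
  define Sg where "Sg = Sigma (Field r) (\<lambda>a. Func (underS r a) (Field r))"
  define G where "G = (\<lambda>(a, h). inv_into X e ` (h ` underS r a))"
  have sub: "{t. t \<subseteq> X \<and> |t| <o r} \<subseteq> G ` Sg"
  proof
    fix t assume "t \<in> {t. t \<subseteq> X \<and> |t| <o r}"
    then have tX: "t \<subseteq> X" and ts: "|t| <o r" by auto
    obtain a f where a: "a \<in> Field r" and f: "bij_betw f (underS r a) t" using small_bij[OF r(1) ts] by blast
    define h where "h = (\<lambda>x. if x \<in> underS r a then e (f x) else undefined)"
    have hF: "h \<in> Func (underS r a) (Field r)"
      unfolding Func_def h_def using f tX e(2) unfolding bij_betw_def by force
    have "h ` underS r a = e ` (f ` underS r a)" unfolding h_def by (auto simp: image_def)
    also have "\<dots> = e ` t" using f unfolding bij_betw_def by simp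
    finally have "G (a, h) = inv_into X e ` (e ` t)" unfolding G_def by simp
    also have "\<dots> = t" using inv_into_image_cancel[OF e(1) tX] .
    finally have "t = G (a, h)" by simp
    moreover have "(a, h) \<in> Sg" unfolding Sg_def using a hF by blast
    ultimately show "t \<in> G ` Sg" by blast
  qed
  have "Sg \<subseteq> Field r \<times> less_exp_set r" unfolding Sg_def less_exp_set_def by auto
  then have "|Sg| \<le>o |Field r \<times> less_exp_set r|" by (rule card_of_mono1)
  moreover have "|Field r \<times> less_exp_set r| \<le>o r"
    using card_of_Times_ordLeq_infinite_Field[OF r(2) field_le[OF r(1)] r(3) r(1)] .
  ultimately have "|Sg| \<le>o r" by (rule ordLeq_transitive)
  then have "|G ` Sg| \<le>o r" using card_of_image[of G Sg] by (rule ordLeq_transitive[rotated])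
  with card_of_mono1[OF sub] show ?thesis by (rule ordLeq_transitive)
qed


lemma under_small:
  assumes r: "Card_order r" "\<not> finite (Field r)" and k: "k \<in> Field r"
  shows "|under r k| <o r"
proof -
  obtain k' where k': "k' \<in> Field r" "k \<noteq> k'" "(k, k') \<in> r"
    using infinite_Card_order_limit[OF r k] by blast
  have wo: "Well_order r" using r(1) by (rule card_order_on_well_order_on)
  have "under r k \<subseteq> underS r k'"
  proof
    fix x assume "x \<in> under r k"
    then have xk: "(x, k) \<in> r" unfolding under_def by simp
    then have "(x, k') \<in> r" using k' wo unfolding well_order_on_def linear_order_on_def
        partial_order_on_def preorder_on_def trans_def by blast
    moreover have "x \<noteq> k'"
    proof
      assume "x = k'"
      then have "(k', k) \<in> r" using xk by simp
      then show False using k' wo unfolding well_order_on_def linear_order_on_def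
        partial_order_on_def antisym_def by blast
    qed
    ultimately show "x \<in> underS r k'" unfolding underS_def by simp
  qed
  then have "|under r k| \<le>o |underS r k'|" by (rule card_of_mono1)
  moreover have "|underS r k'| <o r" using card_of_underS[OF r(1) k'(1)] .
  ultimately show ?thesis by (rule ordLeq_ordLess_trans)
qed

lemma not_field_small: "Card_order r \<Longrightarrow> Field r \<subseteq> A \<Longrightarrow> |A| <o r \<Longrightarrow> False"
proof -
  assume r: "Card_order r" and sub: "Field r \<subseteq> A" and A: "|A| <o r"
  have "|Field r| \<le>o |A|" using sub by (rule card_of_mono1)
  then have "|Field r| <o r" using A by (rule ordLeq_ordLess_trans)
  moreover have "r =o |Field r|" using card_of_Field_ordIso[OF r] by (rule ordIso_symmetric)
  ultimately have "r <o r" using ordIso_ordLess_trans by blast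
  then show False using ordLess_irreflexive by blast
qed

lemma regular_from_exp:
  fixes r :: "'a rel"
  assumes r: "Card_order r" "\<not> finite (Field r)" "|less_exp_set r| \<le>o r"
  shows "regularCard r"
  unfolding regularCard_def
proof (intro allI impI)
  fix K assume K: "K \<subseteq> Field r \<and> cofinal K r"
  have le: "|K| \<le>o r" using card_of_mono1[of K "Field r"] K field_le[OF r(1)] ordLeq_transitive by blast
  show "|K| =o r"
  proof (rule ccontr)
    assume "\<not> |K| =o r"
    then have Ks: "|K| <o r" using le ordLeq_iff_ordLess_or_ordIso by blast
    obtain a0 \<pi> where a0: "a0 \<in> Field r" and pi: "bij_betw \<pi> (underS r a0) K"
      using small_bij[OF r(1) Ks] by blast
    define FK where "FK = Func K (Field r)"
    define \<iota> where "\<iota> = (\<lambda>(h::'a \<Rightarrow> 'a) (x::'a). if x \<in> underS r a0 then h (\<pi> x) else (undefined::'a))"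
    have inj: "inj_on \<iota> FK"
    proof (rule inj_onI)
      fix h1 h2 assume h: "h1 \<in> FK" "h2 \<in> FK" "\<iota> h1 = \<iota> h2"
      show "h1 = h2"
      proof
        fix y
        show "h1 y = h2 y"
        proof (cases "y \<in> K")
          case True
          then obtain x where x: "x \<in> underS r a0" "y = \<pi> x" using pi unfolding bij_betw_def by blast
          have "\<iota> h1 x = \<iota> h2 x" using h(3) by simp
          then show ?thesis using x unfolding \<iota>_def by simp
        next
          case False
          then show ?thesis using h(1,2) unfolding FK_def Func_def by auto
        qed
      qed
    qed
    have img: "\<iota> ` FK \<subseteq> less_exp_set r"
    proof
      fix g assume "g \<in> \<iota> ` FK"
      then obtain h where h: "h \<in> FK" "g = \<iota> h" by blast
      have "g \<in> Func (underS r a0) (Field r)"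
        unfolding Func_def h(2) \<iota>_def using h(1) pi unfolding FK_def Func_def bij_betw_def by auto
      then show "g \<in> less_exp_set r" unfolding less_exp_set_def using a0 by blast
    qed
    have "|FK| \<le>o |less_exp_set r|" using card_of_ordLeq[of FK "less_exp_set r"] inj img by blast
    then have "|FK| \<le>o r" using r(3) by (rule ordLeq_transitive)
    then have "|FK| \<le>o |Field r|" using card_of_Field_ordIso[OF r(1)] ordIso_symmetric ordLeq_ordIso_trans by blast
    then obtain e where e: "inj_on e FK" "e ` FK \<subseteq> Field r" using card_of_ordLeq[of FK "Field r"] by metis
    define bad where "bad k = (\<lambda>h. h k) ` {h \<in> FK. (e h, k) \<in> r}" for k
    have bad_small: "|bad k| <o r" if k: "k \<in> Field r" for k
    proof -
      have "|bad k| \<le>o |{h \<in> FK. (e h, k) \<in> r}|" unfolding bad_def by (rule card_of_image)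
      moreover have "|{h \<in> FK. (e h, k) \<in> r}| \<le>o |under r k|"
      proof -
        have "inj_on e {h \<in> FK. (e h, k) \<in> r}" using e(1) by (rule inj_on_subset) blast
        moreover have "e ` {h \<in> FK. (e h, k) \<in> r} \<subseteq> under r k" unfolding under_def by blast
        ultimately show ?thesis using card_of_ordLeq by blast
      qed
      moreover have "|under r k| <o r" using under_small[OF r(1,2) k] .
      ultimately show ?thesis using ordLeq_transitive ordLeq_ordLess_trans by blast
    qed
    have ex: "\<exists>v. v \<in> Field r \<and> v \<notin> bad k" if k: "k \<in> Field r" for k
    proof (rule ccontr)
      assume "\<not> (\<exists>v. v \<in> Field r \<and> v \<notin> bad k)"
      then have "Field r \<subseteq> bad k" by blast
      then show False using not_field_small[OF r(1) _ bad_small[OF k]] by blast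
    qed
    define d where "d = (\<lambda>k. if k \<in> K then (SOME v. v \<in> Field r \<and> v \<notin> bad k) else undefined)"
    have dk: "d k \<in> Field r \<and> d k \<notin> bad k" if "k \<in> K" for k
    proof -
      have "k \<in> Field r" using K that by blast
      then have "\<exists>v. v \<in> Field r \<and> v \<notin> bad k" by (rule ex)
      then have "(SOME v. v \<in> Field r \<and> v \<notin> bad k) \<in> Field r \<and> (SOME v. v \<in> Field r \<and> v \<notin> bad k) \<notin> bad k"
        by (rule someI_ex)
      then show ?thesis unfolding d_def using that by simp
    qed
    have dF: "d \<in> FK" unfolding FK_def Func_def using dk by (simp add: d_def)
    have "e d \<in> Field r" using e(2) dF by blast
    then obtain k where k: "k \<in> K" "e d \<noteq> k" "(e d, k) \<in> r" using K unfolding cofinal_def by blast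
    have "d k \<in> bad k" unfolding bad_def using dF k(3) by blast
    then show False using dk[OF k(1)] by blast
  qed
qed


lemma restrict_dom_id: "dom f \<subseteq> S \<Longrightarrow> f |` S = f"
proof (rule ext)
  fix x assume d: "dom f \<subseteq> S"
  show "(f |` S) x = f x"
  proof (cases "x \<in> S")
    case True then show ?thesis by simp
  next
    case False
    then have "x \<notin> dom f" using d by blast
    then show ?thesis using False by (simp add: domIff)
  qed
qed

lemma cc_generic:
  fixes F :: "('y \<rightharpoonup> 'v) set" and r :: "'b rel"
  assumes r: "Card_order r" "\<not> finite (Field r)" "|less_exp_set r| \<le>o r"
    and V: "|UNIV :: 'v set| \<le>o r"
    and small: "\<forall>f\<in>F. |dom f| <o r"
    and big: "r <o |F|"
  shows "\<exists>f\<in>F. \<exists>f'\<in>F. f \<noteq> f' \<and> (\<forall>x\<in>dom f \<inter> dom f'. f x = f' x)"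
proof -
  have reg: "regularCard r" using regular_from_exp[OF r] .
  have wo: "wo_rel r" using r(1) unfolding wo_rel_def by (rule card_order_on_well_order_on)
  define RS where "RS S = (\<lambda>f. f |` S) ` F" for S
  define gr where "gr g = {(x, v). g x = Some v}" for g :: "'y \<rightharpoonup> 'v"
  have gr_inj: "inj gr"
  proof (rule injI)
    fix g1 g2 assume eq: "gr g1 = gr g2"
    show "g1 = g2"
    proof
      fix x show "g1 x = g2 x"
      proof (cases "g1 x")
        case None
        then show ?thesis using eq unfolding gr_def
          by (metis (mono_tags, lifting) case_prodI mem_Collect_eq not_None_eq old.prod.case)
      next
        case (Some v)
        then have "(x, v) \<in> gr g1" unfolding gr_def by simp
        then have "(x, v) \<in> gr g2" using eq by simp
        then show ?thesis using Some unfolding gr_def by simp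
      qed
    qed
  qed
  have RS_card: "|RS S| \<le>o r" if S: "|S| \<le>o r" for S
  proof -
    have sub: "gr ` RS S \<subseteq> {t. t \<subseteq> S \<times> (UNIV :: 'v set) \<and> |t| <o r}"
    proof
      fix t assume "t \<in> gr ` RS S"
      then obtain f where f: "f \<in> F" "t = gr (f |` S)" unfolding RS_def by blast
      have "t \<subseteq> S \<times> UNIV" unfolding f(2) gr_def by (auto simp: restrict_map_def split: if_splits)
      moreover have "|t| \<le>o |dom f|"
      proof -
        have "inj_on fst t" unfolding f(2) gr_def by (rule inj_onI) auto
        moreover have "fst ` t \<subseteq> dom f" unfolding f(2) gr_def by (auto simp: restrict_map_def split: if_splits)
        ultimately show ?thesis using card_of_ordLeq[of t "dom f"] by blast
      qed
      then have "|t| <o r" using small f(1) ordLeq_ordLess_trans by blast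
      ultimately show "t \<in> {t. t \<subseteq> S \<times> (UNIV :: 'v set) \<and> |t| <o r}" by blast
    qed
    have "|S \<times> (UNIV :: 'v set)| \<le>o r" using card_of_Times_ordLeq_infinite_Field[OF r(2) S V r(1)] .
    then have "|{t. t \<subseteq> S \<times> (UNIV :: 'v set) \<and> |t| <o r}| \<le>o r" by (rule small_subsets[OF r])
    then have "|gr ` RS S| \<le>o r" using card_of_mono1[OF sub] ordLeq_transitive by blast
    moreover have "|RS S| \<le>o |gr ` RS S|"
      using card_of_ordLeq[of "RS S" "gr ` RS S"] inj_on_subset[OF gr_inj] by blast
    ultimately show ?thesis using ordLeq_transitive by blast
  qed
  define wit where "wit S g = (SOME f. f \<in> F \<and> f |` S = g)" for S g
  have wit: "wit S g \<in> F \<and> wit S g |` S = g" if "g \<in> RS S" for S g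
  proof -
    have "\<exists>f. f \<in> F \<and> f |` S = g" using that unfolding RS_def by blast
    then show ?thesis unfolding wit_def by (rule someI_ex)
  qed
  define \<Phi> where "\<Phi> S = S \<union> (\<Union>g\<in>RS S. dom (wit S g))" for S
  have \<Phi>_card: "|\<Phi> S| \<le>o r" if S: "|S| \<le>o r" for S
  proof -
    have "\<forall>g\<in>RS S. |dom (wit S g)| \<le>o r" using wit small ordLess_imp_ordLeq by blast
    then have "|\<Union>g\<in>RS S. dom (wit S g)| \<le>o r"
      by (rule card_of_UNION_ordLeq_infinite_Field[OF r(2) r(1) RS_card[OF S]])
    then show ?thesis unfolding \<Phi>_def using card_of_Un_ordLeq_infinite_Field[OF r(2) S _ r(1)] by blast
  qed
  define H where "H = (\<lambda>B x. \<Phi> (\<Union>y\<in>underS r x. B y))"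
  define B where "B = wo_rel.worec r H"
  have adm: "wo_rel.adm_wo r H" unfolding wo_rel.adm_wo_def[OF wo]
  proof (intro allI impI)
    fix f1 f2 :: "'b \<Rightarrow> 'y set" and x
    assume e: "\<forall>y\<in>underS r x. f1 y = f2 y"
    have "(\<Union>y\<in>underS r x. f1 y) = (\<Union>y\<in>underS r x. f2 y)" using e by (intro SUP_cong refl) blast
    then show "H f1 x = H f2 x" unfolding H_def by (rule arg_cong)
  qed
  have fp: "B = H B" unfolding B_def by (rule wo_rel.worec_fixpoint[OF wo adm])
  have Bfix: "B x = \<Phi> (\<Union>y\<in>underS r x. B y)" for x
  proof -
    have "B x = H B x" using fp by (rule fun_cong)
    also have "\<dots> = \<Phi> (\<Union>y\<in>underS r x. B y)" unfolding H_def by (rule refl)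
    finally show ?thesis .
  qed
  have Bsize: "x \<in> Field r \<longrightarrow> |B x| \<le>o r" for x
  proof (induct x rule: wo_rel.well_order_induct[OF wo])
    case (1 x)
    show ?case
    proof
      assume x: "x \<in> Field r"
      have "|underS r x| \<le>o r" using card_of_underS[OF r(1) x] by (rule ordLess_imp_ordLeq)
      moreover have "\<forall>y\<in>underS r x. |B y| \<le>o r"
        using 1 underS_Field[of _ r x] unfolding underS_def by blast
      ultimately have "|\<Union>y\<in>underS r x. B y| \<le>o r"
        using card_of_UNION_ordLeq_infinite_Field[OF r(2) r(1)] by blast
      then show "|B x| \<le>o r" unfolding Bfix[of x] by (rule \<Phi>_card)
    qed
  qed
  have chain: "relChain r B" unfolding relChain_def
  proof (intro allI impI)
    fix i j assume ij: "(i, j) \<in> r"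
    show "B i \<subseteq> B j"
    proof (cases "i = j")
      case True then show ?thesis by simp
    next
      case False
      then have "i \<in> underS r j" using ij unfolding underS_def by simp
      then show ?thesis unfolding Bfix[of j] \<Phi>_def by blast
    qed
  qed
  define Bs where "Bs = (\<Union>x\<in>Field r. B x)"
  have Bs_card: "|Bs| \<le>o r" unfolding Bs_def
    using card_of_UNION_ordLeq_infinite_Field[OF r(2) r(1) field_le[OF r(1)]] Bsize by blast
  obtain f where fF: "f \<in> F" and fnot: "\<not> dom f \<subseteq> Bs"
  proof (rule ccontr)
    assume "\<not> thesis"
    then have all: "\<forall>f\<in>F. dom f \<subseteq> Bs" using that by blast
    have "F \<subseteq> RS Bs" unfolding RS_def
    proof
      fix f assume "f \<in> F"
      then have "f = f |` Bs" using all restrict_dom_id by metis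
      then show "f \<in> (\<lambda>f. f |` Bs) ` F" using \<open>f \<in> F\<close> by blast
    qed
    then have "|F| \<le>o r" using card_of_mono1 RS_card[OF Bs_card] ordLeq_transitive by blast
    then have "r <o r" using big ordLess_ordLeq_trans by blast
    then show False using ordLess_irreflexive by blast
  qed
  define s0 where "s0 = dom f \<inter> Bs"
  have s0_small: "|s0| <o r"
    using card_of_mono1[of s0 "dom f"] small fF ordLeq_ordLess_trans unfolding s0_def by blast
  have "s0 \<subseteq> (\<Union>i\<in>Field r. B i)" unfolding s0_def Bs_def by blast
  then obtain a where a: "a \<in> Field r" "s0 \<subseteq> B a"
    using regularCard_UNION[OF r(1) reg chain _ s0_small] by blast
  obtain c where c: "c \<in> Field r" "a \<noteq> c" "(a, c) \<in> r"
    using infinite_Card_order_limit[OF r(1) r(2) a(1)] by blast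
  define S where "S = (\<Union>y\<in>underS r c. B y)"
  have aS: "B a \<subseteq> S" unfolding S_def using c unfolding underS_def by blast
  define g where "g = f |` S"
  have gR: "g \<in> RS S" unfolding g_def RS_def using fF by blast
  define f' where "f' = wit S g"
  have f'F: "f' \<in> F" and f'S: "f' |` S = g" using wit[OF gR] unfolding f'_def by blast+
  have "dom f' \<subseteq> \<Phi> S" unfolding \<Phi>_def f'_def using gR by blast
  also have "\<dots> = B c" unfolding Bfix[of c] S_def ..
  also have "\<dots> \<subseteq> Bs" unfolding Bs_def using c(1) by blast
  finally have f'B: "dom f' \<subseteq> Bs" .
  have neq: "f \<noteq> f'" using fnot f'B by blast
  have agree: "\<forall>x\<in>dom f \<inter> dom f'. f x = f' x"
  proof
    fix x assume x: "x \<in> dom f \<inter> dom f'"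
    then have "x \<in> s0" unfolding s0_def using f'B by blast
    then have xS: "x \<in> S" using a(2) aS by blast
    have "f x = g x" unfolding g_def using xS by simp
    also have "\<dots> = (f' |` S) x" using f'S by simp
    also have "\<dots> = f' x" using xS by simp
    finally show "f x = f' x" .
  qed
  show ?thesis using fF f'F neq agree by blast
qed





lemma small_dom:
  assumes rm: "Card_order rm" "\<not> finite (Field rm)" and w: "|w| <o rm"
    and d: "dom f = pairs2 rl w"
  shows "|dom f| <o rm"
proof -
  have sub: "dom f \<subseteq> w \<times> w" unfolding d pairs2_def by blast
  have wo: "Well_order rm" using rm(1) by (rule card_order_on_well_order_on)
  have "|w \<times> w| <o rm"
  proof (cases "finite w")
    case True
    then have "finite (Field (card_of (w \<times> w)))" by (simp add: Field_card_of)
    then show ?thesis by (rule finite_ordLess_infinite[OF card_of_Well_order wo _ rm(2)])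
  next
    case False
    then have "|w \<times> w| =o |w|" by (rule card_of_Times_same_infinite)
    then show ?thesis using w by (rule ordIso_ordLess_trans)
  qed
  with card_of_mono1[OF sub] show ?thesis by (rule ordLeq_ordLess_trans)
qed

theorem proposition4p5:
  fixes rl :: "'a rel" and rm :: "'b rel"
  assumes "card_order rl" and "card_order rm"
    and "infinite (Field rl)" and "infinite (Field rm)"
    and "(rm, rl) \<in> ordLess"
    and "(card_of (less_exp_set rm), rm) \<in> ordIso"
    and "regularCard rl"
  shows "chain_condition (Pforce rl rm) (cardSuc rm)"
proof -
  have co: "card_order rl" using assms(1) .
  have Crm: "Card_order rm" using card_order_on_Card_order[OF assms(2)] by blast
  have inf: "\<not> finite (Field rm)" using assms(4) .
  have exp: "|less_exp_set rm| \<le>o rm" using assms(6) by (rule ordIso_imp_ordLeq)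
  have wo: "Well_order rm" using Crm by (rule card_order_on_well_order_on)
  have V: "|UNIV :: sym3 set| \<le>o rm"
  proof -
    have eq: "(UNIV :: sym3 set) = {Ge, Perp, U}" using sym3.exhaust by blast
    have "finite (UNIV :: sym3 set)" by (subst eq) simp
    then have "finite (Field (card_of (UNIV :: sym3 set)))" by (simp only: Field_card_of)
    then have "|UNIV :: sym3 set| <o rm" by (rule finite_ordLess_infinite[OF card_of_Well_order wo _ inf])
    then show ?thesis by (rule ordLess_imp_ordLeq)
  qed
  show ?thesis unfolding chain_condition_def
  proof (intro allI impI)
    fix A assume ac: "antichain (Pforce rl rm) A"
    show "|A| <o cardSuc rm"
    proof (rule ccontr)
      assume nl: "\<not> |A| <o cardSuc rm"
      have "cardSuc rm \<le>o |A|"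
        using not_ordLess_iff_ordLeq[OF cardSuc_Well_order[OF Crm] card_of_Well_order, of A] nl by (rule iffD1)
      with cardSuc_greater[OF Crm] have big: "rm <o |A|" by (rule ordLess_ordLeq_trans)
      have AP: "A \<subseteq> Pforce rl rm" using ac unfolding antichain_def by blast
      have small: "\<forall>f\<in>A. |dom f| <o rm"
      proof
        fix f assume "f \<in> A"
        then have "f \<in> Pforce rl rm" using AP by blast
        then obtain w where w: "|w| <o rm" "valuation rl w f" unfolding Pforce_def by blast
        have "dom f = pairs2 rl w" using w(2) unfolding valuation_def by blast
        then show "|dom f| <o rm" using small_dom[OF Crm inf w(1)] by blast
      qed
      have "\<exists>p\<in>A. \<exists>q\<in>A. p \<noteq> q \<and> (\<forall>x\<in>dom p \<inter> dom q. p x = q x)"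
        by (rule cc_generic[OF Crm inf exp V small big])
      then obtain p q where pq: "p \<in> A" "q \<in> A" "p \<noteq> q" "\<forall>x\<in>dom p \<inter> dom q. p x = q x"
        by blast
      have "p \<in> Pforce rl rm" using AP pq(1) by (rule subsetD)
      then have "\<exists>w. w \<subseteq> Field rl \<and> |w| <o rm \<and> valuation rl w p" unfolding Pforce_def by simp
      then obtain wp where wp: "wp \<subseteq> Field rl" "|wp| <o rm" "valuation rl wp p" by blast
      have "q \<in> Pforce rl rm" using AP pq(2) by (rule subsetD)
      then have "\<exists>w. w \<subseteq> Field rl \<and> |w| <o rm \<and> valuation rl w q" unfolding Pforce_def by simp
      then obtain wq where wq: "wq \<subseteq> Field rl" "|wq| <o rm" "valuation rl wq q" by blast
      have "\<exists>s. valuation rl (wp \<union> wq) s \<and> p \<subseteq>\<^sub>m s \<and> q \<subseteq>\<^sub>m s"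
        by (rule amalgam[OF co wp(3) wq(3) pq(4)])
      then obtain s where s: "valuation rl (wp \<union> wq) s" "p \<subseteq>\<^sub>m s" "q \<subseteq>\<^sub>m s" by blast
      have un: "|wp \<union> wq| <o rm" using card_of_Un_ordLess_infinite_Field[OF inf Crm wp(2) wq(2)] .
      have "wp \<union> wq \<subseteq> Field rl" using wp(1) wq(1) by (rule Un_least)
      then have "s \<in> Pforce rl rm" unfolding Pforce_def using un s(1) by blast
      then have "compatible (Pforce rl rm) p q" unfolding compatible_def using s(2,3) by blast
      moreover have "\<not> compatible (Pforce rl rm) p q" using ac pq(1,2,3) unfolding antichain_def by blast
      ultimately show False by contradiction
    qed
  qed
qed


end
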